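(* Let $\mathbf{L}$ be a distributive lattice, $n\ge1$ an integer and $F$ an upset of $\mathbf{L}$. The following are equivalent: (i) $F$ is an $n$-prime filter; (ii) $F$ is a filter and $F$ is an intersection of at most $n$ prime upsets; (iii) $F$ is an intersection of at most $n$ prime filters; (iv) there is a lattice homomorphism $h\colon\mathbf{L}\to\mathbf{2}^n$ with $F=h^{-1}[\{1\}]$, where $\mathbf{2}^n$ is the Boolean lattice with $n$ atoms and $1$ its top element.
   Context: A filter on a lattice is an upset closed under binary meets (the empty set and the whole lattice count). An upset $F$ is prime if $a\vee b\in F$ implies $a\in F$ or $b\in F$; a prime filter is a filter which is a prime upset. A filter $F$ is $n$-prime if for all $x_1,\dots,x_{n+1}$: $x_1\vee\dots\vee x_{n+1}\in F$ implies $\bigvee_{j\neq i}x_j\in F$ for some $i\in\{1,\dots,n+1\}$. An intersection of zero sets is the whole lattice. Lattice homomorphisms need not preserve bounds. *)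

theory Defs
  imports Main
begin

definition upset :: "'a::lattice set \<Rightarrow> bool" where
  "upset F \<longleftrightarrow> (\<forall>x y. x \<in> F \<longrightarrow> x \<le> y \<longrightarrow> y \<in> F)"

definition lfilter :: "'a::lattice set \<Rightarrow> bool" where
  "lfilter F \<longleftrightarrow> upset F \<and> (\<forall>x y. x \<in> F \<longrightarrow> y \<in> F \<longrightarrow> inf x y \<in> F)"

definition prime_upset :: "'a::lattice set \<Rightarrow> bool" where
  "prime_upset F \<longleftrightarrow> upset F \<and> (\<forall>a b. sup a b \<in> F \<longrightarrow> a \<in> F \<or> b \<in> F)"

definition prime_filter :: "'a::lattice set \<Rightarrow> bool" where
  "prime_filter F \<longleftrightarrow> lfilter F \<and> prime_upset F"

text \<open>n-prime filter: for x_0,...,x_n (n+1 elements), if their join is in F then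
  the join of all but one of them is in F. Finite joins are Sup_fin (n >= 1 so the sets are nonempty).\<close>
definition n_prime_filter :: "nat \<Rightarrow> 'a::lattice set \<Rightarrow> bool" where
  "n_prime_filter n F \<longleftrightarrow> lfilter F \<and>
     (\<forall>x :: nat \<Rightarrow> 'a. Sup_fin (x ` {..n}) \<in> F \<longrightarrow>
        (\<exists>i\<le>n. Sup_fin (x ` ({..n} - {i})) \<in> F))"

text \<open>The Boolean lattice 2^n with n atoms is modelled as the powerset of {..<n},
  ordered by inclusion; its top element is {..<n}.\<close>
definition hom_to_2n :: "nat \<Rightarrow> ('a::lattice \<Rightarrow> nat set) \<Rightarrow> bool" where
  "hom_to_2n n h \<longleftrightarrow> (\<forall>x. h x \<subseteq> {..<n}) \<and>
     (\<forall>x y. h (sup x y) = h x \<union> h y) \<and> (\<forall>x y. h (inf x y) = h x \<inter> h y)"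

end

theory Submission
  imports Defs
begin



lemma prime_Sup_fin:
  fixes A :: "'a::lattice set"
  assumes "prime_upset P" "finite A" "A \<noteq> {}" "Sup_fin A \<in> P"
  shows "\<exists>a\<in>A. a \<in> P"
  using assms(2,3,4)
proof (induction rule: finite_ne_induct)
  case (singleton x) then show ?case by simp
next
  case (insert x B)
  then have "sup x (Sup_fin B) \<in> P" by simp
  then show ?case using assms(1) insert unfolding prime_upset_def by blast
qed

lemma filter_Inf_fin:
  fixes A :: "'a::lattice set"
  assumes "lfilter F" "finite A" "A \<noteq> {}" "A \<subseteq> F"
  shows "Inf_fin A \<in> F"
  using assms(2,3,4)
proof (induction rule: finite_ne_induct)
  case (singleton x) then show ?case by simp
next
  case (insert x B)
  then show ?case using assms(1) unfolding lfilter_def by simp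
qed

lemma upset_mono: "upset F \<Longrightarrow> x \<in> F \<Longrightarrow> x \<le> y \<Longrightarrow> y \<in> F"
  unfolding upset_def by blast

lemma ii_to_i:
  fixes F :: "'a::distrib_lattice set"
  assumes n: "n \<ge> 1" and lf: "lfilter F" and G: "finite G" "card G \<le> n" "\<forall>P\<in>G. prime_upset P" "F = \<Inter>G"
  shows "n_prime_filter n F"
  unfolding n_prime_filter_def
proof (intro conjI allI impI lf)
  fix x :: "nat \<Rightarrow> 'a"
  assume xs: "Sup_fin (x ` {..n}) \<in> F"
  have "\<forall>P\<in>G. \<exists>i\<le>n. x i \<in> P"
  proof
    fix P assume "P \<in> G"
    then have "Sup_fin (x ` {..n}) \<in> P" "prime_upset P" using xs G by auto
    then show "\<exists>i\<le>n. x i \<in> P" using prime_Sup_fin[of P "x ` {..n}"] by auto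
  qed
  then obtain phi where phi: "\<forall>P\<in>G. phi P \<le> n \<and> x (phi P) \<in> P" by metis
  have "card (phi ` G) \<le> card G" using G(1) card_image_le by blast
  also have "\<dots> < card {..n}" using G by simp
  finally have "\<not> {..n} \<subseteq> phi ` G" using card_mono[of "phi ` G" "{..n}"] G(1) by auto
  then obtain i where i: "i \<le> n" "i \<notin> phi ` G" by auto
  have ne: "x ` ({..n} - {i}) \<noteq> {}"
  proof -
    have "(if i = 0 then 1 else 0) \<in> {..n} - {i}" using n by auto
    then show ?thesis by blast
  qed
  have "Sup_fin (x ` ({..n} - {i})) \<in> P" if "P \<in> G" for P
  proof -
    have "phi P \<in> {..n} - {i}" using phi i that by auto
    then have "x (phi P) \<le> Sup_fin (x ` ({..n} - {i}))" by (intro Sup_fin.coboundedI) auto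
    moreover have "upset P" using G that unfolding prime_upset_def by auto
    ultimately show ?thesis using phi that upset_mono by blast
  qed
  then show "\<exists>i\<le>n. Sup_fin (x ` ({..n} - {i})) \<in> F" using i G by auto
qed

lemma iii_to_ii:
  fixes F :: "'a::lattice set"
  assumes "finite G" "\<forall>P\<in>G. prime_filter P" "F = \<Inter>G"
  shows "lfilter F \<and> (\<forall>P\<in>G. prime_upset P)"
  using assms unfolding prime_filter_def lfilter_def upset_def by blast

lemma pf_sup: "prime_filter Q \<Longrightarrow> sup x y \<in> Q \<longleftrightarrow> x \<in> Q \<or> y \<in> Q"
  unfolding prime_filter_def prime_upset_def upset_def by (meson sup.cobounded1 sup.cobounded2)

lemma pf_inf: "prime_filter Q \<Longrightarrow> inf x y \<in> Q \<longleftrightarrow> x \<in> Q \<and> y \<in> Q"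
  unfolding prime_filter_def lfilter_def upset_def by (meson inf.cobounded1 inf.cobounded2)

lemma iii_to_iv:
  fixes F :: "'a::lattice set"
  assumes "finite G" "card G \<le> n" "\<forall>P\<in>G. prime_filter P" "F = \<Inter>G"
  shows "\<exists>h. hom_to_2n n h \<and> F = {x. h x = {..<n}}"
proof -
  obtain f where f: "bij_betw f {0..<card G} G" using ex_bij_betw_nat_finite[OF assms(1)] by blast
  define m where "m = card G"
  define h where "h x = {i. i < n \<and> (i < m \<longrightarrow> x \<in> f i)}" for x
  have pf: "prime_filter (f i)" if "i < m" for i
    using f that assms(3) unfolding m_def bij_betw_def by auto
  have "hom_to_2n n h" unfolding hom_to_2n_def
  proof (intro conjI allI)
    fix x show "h x \<subseteq> {..<n}" unfolding h_def by auto
  next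
    fix x y show "h (sup x y) = h x \<union> h y"
      unfolding h_def using pf pf_sup by auto
  next
    fix x y show "h (inf x y) = h x \<inter> h y"
      unfolding h_def using pf pf_inf by auto
  qed
  moreover have "F = {x. h x = {..<n}}"
  proof -
    have "x \<in> \<Inter>G \<longleftrightarrow> (\<forall>i<m. x \<in> f i)" for x
    proof
      assume "x \<in> \<Inter>G" then show "\<forall>i<m. x \<in> f i"
        using f unfolding m_def bij_betw_def by auto
    next
      assume a: "\<forall>i<m. x \<in> f i"
      show "x \<in> \<Inter>G"
      proof
        fix X assume "X \<in> G"
        then obtain i where "i \<in> {0..<m}" "X = f i" using f unfolding m_def bij_betw_def by blast
        then show "x \<in> X" using a by simp
      qed
    qed
    moreover have "h x = {..<n} \<longleftrightarrow> (\<forall>i<m. x \<in> f i)" for x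
    proof
      assume "h x = {..<n}"
      show "\<forall>i<m. x \<in> f i"
      proof (intro allI impI)
        fix i assume "i < m"
        then have "i < n" using assms(2) unfolding m_def by simp
        then have "i \<in> h x" using \<open>h x = {..<n}\<close> by simp
        then show "x \<in> f i" using \<open>i < m\<close> unfolding h_def by simp
      qed
    next
      assume "\<forall>i<m. x \<in> f i"
      then show "h x = {..<n}" unfolding h_def by auto
    qed
    ultimately show ?thesis using assms(4) by auto
  qed
  ultimately show ?thesis by blast
qed

lemma iv_to_iii:
  fixes F :: "'a::lattice set"
  assumes "hom_to_2n n h" "F = {x. h x = {..<n}}"
  shows "\<exists>G. finite G \<and> card G \<le> n \<and> (\<forall>P\<in>G. prime_filter P) \<and> F = \<Inter>G"
proof -
  define P where "P i = {x. i \<in> h x}" for i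
  have hs: "h (sup x y) = h x \<union> h y" "h (inf x y) = h x \<inter> h y" "h x \<subseteq> {..<n}" for x y
    using assms(1) unfolding hom_to_2n_def by auto
  have mono: "x \<le> y \<Longrightarrow> h x \<subseteq> h y" for x y
    using hs(1)[of x y] by (simp add: sup_absorb2) (metis Un_upper1)
  have "prime_filter (P i)" for i
    unfolding prime_filter_def prime_upset_def lfilter_def upset_def P_def
    using mono hs by auto
  moreover have "F = \<Inter>(P ` {..<n})"
    using assms(2) hs(3) unfolding P_def by auto
  moreover have "card (P ` {..<n}) \<le> n" using card_image_le[of "{..<n}" P] by simp
  ultimately show ?thesis by blast
qed




definition indep :: "'a::lattice set \<Rightarrow> nat set \<Rightarrow> (nat \<Rightarrow> 'a) \<Rightarrow> bool" where
  "indep F I t \<longleftrightarrow> finite I \<and> I \<noteq> {} \<and> Sup_fin (t ` I) \<in> F \<and>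
     (\<forall>i\<in>I. \<exists>y. y \<notin> F \<and> (\<forall>j\<in>I-{i}. t j \<le> y))"

lemma SI: "finite A \<Longrightarrow> Sup_fin (insert y A) = (if A = {} then y else sup y (Sup_fin A))"
  by (simp add: Sup_fin.insert)

lemma SI_mono:
  fixes y :: "'a::lattice"
  shows "finite A \<Longrightarrow> y \<le> z \<Longrightarrow> Sup_fin (insert y A) \<le> Sup_fin (insert z A)"
  by (simp add: SI sup.coboundedI1 sup_mono)

lemma SI_inf:
  fixes y :: "'a::distrib_lattice"
  shows "finite A \<Longrightarrow> Sup_fin (insert (inf y z) A) = inf (Sup_fin (insert y A)) (Sup_fin (insert z A))"
  by (simp add: SI sup_inf_distrib2)

lemma SI_sup:
  fixes a :: "'a::lattice"
  shows "finite A \<Longrightarrow> Sup_fin (insert (sup a b) A) = Sup_fin (insert a (insert b A))"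
  by (simp add: SI Sup_fin.insert sup_assoc)

lemma SI_ge: "finite A \<Longrightarrow> (y::'a::lattice) \<le> Sup_fin (insert y A)"
  by (rule Sup_fin.coboundedI) auto

lemma SI_ge2: "finite A \<Longrightarrow> a \<in> A \<Longrightarrow> (a::'a::lattice) \<le> Sup_fin (insert y A)"
  by (rule Sup_fin.coboundedI) auto

lemma indep_bound:
  fixes F :: "'a::lattice set"
  assumes n1: "n \<ge> 1" and np: "n_prime_filter n F" and ind: "indep F I t" and c: "card I = Suc n"
  shows False
proof -
  have uF: "upset F" using np unfolding n_prime_filter_def lfilter_def by simp
  have fI: "finite I" using ind unfolding indep_def by simp
  obtain g where g: "bij_betw g {0..<card I} I" using ex_bij_betw_nat_finite[OF fI] by blast
  have at: "{0..<card I} = {..n}" using c by auto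
  then have g': "bij_betw g {..n} I" using g by simp
  define x where "x = t \<circ> g"
  have "x ` {..n} = t ` (g ` {..n})" unfolding x_def by (simp add: image_comp)
  then have "x ` {..n} = t ` I" using g' unfolding bij_betw_def by simp
  then have "Sup_fin (x ` {..n}) \<in> F" using ind unfolding indep_def by simp
  then obtain i where i: "i \<le> n" "Sup_fin (x ` ({..n} - {i})) \<in> F"
    using np unfolding n_prime_filter_def by blast
  have "g ` ({..n} - {i}) = I - {g i}"
    using g' i(1) unfolding bij_betw_def
    by (subst inj_on_image_set_diff[of g "{..n}"]) auto
  moreover have "x ` ({..n} - {i}) = t ` (g ` ({..n} - {i}))" unfolding x_def by (simp add: image_comp)
  ultimately have xe: "x ` ({..n} - {i}) = t ` (I - {g i})" by simp
  have gi: "g i \<in> I" using g' i(1) unfolding bij_betw_def by auto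
  then obtain y where y: "y \<notin> F" "\<forall>j\<in>I-{g i}. t j \<le> y" using ind unfolding indep_def by blast
  have "I - {g i} \<noteq> {}"
  proof
    assume "I - {g i} = {}"
    then have "I \<subseteq> {g i}" by blast
    then have "card I \<le> 1" using card_mono[of "{g i}" I] by simp
    then show False using c n1 by simp
  qed
  then have "Sup_fin (t ` (I - {g i})) \<le> y"
    using fI y(2) by (intro Sup_fin.boundedI) auto
  then show False using i(2) xe y(1) uF upset_mono by metis
qed




lemma P_filter:
  fixes F :: "'a::distrib_lattice set"
  assumes lf: "lfilter F" and fA: "finite A"
  shows "lfilter {y. Sup_fin (insert y A) \<in> F}"
  unfolding lfilter_def upset_def
proof (intro conjI allI impI)
  fix x y assume "x \<in> {y. Sup_fin (insert y A) \<in> F}" "x \<le> y"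
  then show "y \<in> {y. Sup_fin (insert y A) \<in> F}"
    using SI_mono[OF fA] lf unfolding lfilter_def upset_def by blast
next
  fix x y assume "x \<in> {y. Sup_fin (insert y A) \<in> F}" "y \<in> {y. Sup_fin (insert y A) \<in> F}"
  then show "inf x y \<in> {y. Sup_fin (insert y A) \<in> F}"
    using SI_inf[OF fA] lf unfolding lfilter_def by simp
qed

lemma P_contains:
  fixes F :: "'a::lattice set"
  assumes lf: "lfilter F" and fA: "finite A"
  shows "F \<subseteq> {y. Sup_fin (insert y A) \<in> F}"
  using SI_ge[OF fA] lf unfolding lfilter_def upset_def by blast

lemma P_prime:
  fixes F :: "'a::distrib_lattice set"
  assumes lf: "lfilter F" and ind: "indep F I t"
    and maxk: "\<forall>I' t'. indep F I' t' \<longrightarrow> card I' \<noteq> Suc (card I)"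
    and iI: "i \<in> I"
  shows "prime_upset {y. Sup_fin (insert y (t ` (I - {i}))) \<in> F}"
proof -
  define A where "A = t ` (I - {i})"
  have fI: "finite I" using ind unfolding indep_def by simp
  have fA: "finite A" unfolding A_def using fI by simp
  have uF: "upset F" using lf unfolding lfilter_def by simp
  have up: "upset {y. Sup_fin (insert y A) \<in> F}"
    using P_filter[OF lf fA] unfolding lfilter_def by simp
  have pr: "y \<in> {y. Sup_fin (insert y A) \<in> F} \<or> z \<in> {y. Sup_fin (insert y A) \<in> F}"
    if yz: "sup y z \<in> {y. Sup_fin (insert y A) \<in> F}" for y z
  proof (rule ccontr)
    assume "\<not> ?thesis"
    then have ny: "Sup_fin (insert y A) \<notin> F" and nz: "Sup_fin (insert z A) \<notin> F" by auto
    obtain j where j: "j \<notin> I" using ex_new_if_finite[OF infinite_UNIV_nat fI] by blast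
    define t' where "t' = t(i := inf (t i) y, j := inf (t i) z)"
    define I' where "I' = insert j I"
    have ij: "i \<noteq> j" using iI j by auto
    have t'j: "t' j = inf (t i) z" and t'i: "t' i = inf (t i) y" unfolding t'_def using ij by auto
    have t'o: "t' l = t l" if "l \<noteq> i" "l \<noteq> j" for l unfolding t'_def using that by auto
    have img: "t' ` I' = insert (inf (t i) z) (insert (inf (t i) y) A)"
    proof -
      have "t' ` I' = insert (t' j) (insert (t' i) (t' ` (I - {i})))"
        unfolding I'_def using iI by blast
      moreover have "t' ` (I - {i}) = A" unfolding A_def
        by (rule image_cong) (use t'o j in auto)
      ultimately show ?thesis using t'i t'j by simp
    qed
    have tI: "insert (t i) A = t ` I" unfolding A_def using iI by blast
    have join: "Sup_fin (t' ` I') \<in> F"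
    proof -
      have "Sup_fin (t' ` I') = Sup_fin (insert (sup (inf (t i) z) (inf (t i) y)) A)"
        using img SI_sup[OF fA] by simp
      also have "sup (inf (t i) z) (inf (t i) y) = inf (t i) (sup y z)"
        by (simp add: inf_sup_distrib1 sup_commute)
      also have "Sup_fin (insert (inf (t i) (sup y z)) A) =
          inf (Sup_fin (insert (t i) A)) (Sup_fin (insert (sup y z) A))"
        using SI_inf[OF fA] by simp
      finally have e: "Sup_fin (t' ` I') = inf (Sup_fin (t ` I)) (Sup_fin (insert (sup y z) A))"
        using tI by simp
      have "Sup_fin (t ` I) \<in> F" using ind unfolding indep_def by simp
      moreover have "Sup_fin (insert (sup y z) A) \<in> F" using yz by simp
      ultimately show ?thesis using e lf unfolding lfilter_def by simp
    qed
    have rem: "\<exists>u. u \<notin> F \<and> (\<forall>l\<in>I'-{m}. t' l \<le> u)" if m: "m \<in> I'" for m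
    proof -
      consider "m = j" | "m = i" | "m \<in> I" "m \<noteq> i" "m \<noteq> j" using m unfolding I'_def by blast
      then show ?thesis
      proof cases
        case 1
        have "t' l \<le> Sup_fin (insert y A)" if "l \<in> I' - {m}" for l
        proof (cases "l = i")
          case True then show ?thesis using t'i SI_ge[OF fA, of y]
            by (metis inf.coboundedI2)
        next
          case False
          then have "l \<in> I - {i}" "l \<noteq> j" using that 1 unfolding I'_def by auto
          then show ?thesis using t'o SI_ge2[OF fA] unfolding A_def by auto
        qed
        then show ?thesis using ny by blast
      next
        case 2
        have "t' l \<le> Sup_fin (insert z A)" if "l \<in> I' - {m}" for l
        proof (cases "l = j")
          case True then show ?thesis using t'j SI_ge[OF fA, of z]
            by (metis inf.coboundedI2)
        next
          case False
          then have "l \<in> I - {i}" "l \<noteq> j" using that 2 j unfolding I'_def by auto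
          then show ?thesis using t'o SI_ge2[OF fA] unfolding A_def by auto
        qed
        then show ?thesis using nz by blast
      next
        case 3
        then obtain u where u: "u \<notin> F" "\<forall>l\<in>I-{m}. t l \<le> u" using ind unfolding indep_def by blast
        have tiu: "t i \<le> u" using u 3 iI by auto
        have "t' l \<le> u" if lI: "l \<in> I' - {m}" for l
        proof -
          consider "l = j" | "l = i" | "l \<in> I - {m}" "l \<noteq> i" "l \<noteq> j" using lI j unfolding I'_def by blast
          then show ?thesis
          proof cases
            case 1 then show ?thesis using t'j tiu by (metis inf.coboundedI1)
          next
            case 2 then show ?thesis using t'i tiu by (metis inf.coboundedI1)
          next
            case 3 then show ?thesis using t'o u by auto
          qed
        qed
        then show ?thesis using u by blast
      qed
    qed
    have "indep F I' t'" unfolding indep_def using join rem fI unfolding I'_def by auto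
    moreover have "card I' = Suc (card I)" unfolding I'_def using fI j by simp
    ultimately show False using maxk by blast
  qed
  show ?thesis unfolding prime_upset_def A_def[symmetric] using up pr by blast
qed




lemma indepD: "indep F I t \<Longrightarrow> i \<in> I \<Longrightarrow> \<exists>y. y \<notin> F \<and> (\<forall>j\<in>I-{i}. t j \<le> y)"
  unfolding indep_def by blast

lemma P_inter:
  fixes F :: "'a::distrib_lattice set"
  assumes lf: "lfilter F" and ind: "indep F I t"
    and maxk: "\<forall>I' t'. indep F I' t' \<longrightarrow> card I' \<noteq> Suc (card I)"
    and zP: "\<forall>i\<in>I. Sup_fin (insert z (t ` (I - {i}))) \<in> F"
  shows "z \<in> F"
proof -
  have fI: "finite I" and neI: "I \<noteq> {}" using ind unfolding indep_def by auto
  have uF: "upset F" using lf unfolding lfilter_def by simp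
  show ?thesis
  proof (cases "card I = 1")
    case True
    obtain i where "I = {i}" by (rule card_1_singletonE[OF True])
    then show ?thesis using zP by simp
  next
    case False
    have "card I \<noteq> 0" using fI neI by simp
    then have c2: "card I \<ge> 2" using False by linarith
    have ne: "I - {l} \<noteq> {}" if "l \<in> I" for l
    proof
      assume "I - {l} = {}"
      then have "I \<subseteq> {l}" by blast
      then have "card I \<le> 1" using card_mono[of "{l}" I] by simp
      then show False using c2 by simp
    qed
    show ?thesis
    proof (rule ccontr)
      assume zn: "z \<notin> F"
      define s where "s l = Sup_fin (t ` (I - {l}))" for l
      define S where "S = Inf_fin (s ` I)"
      define T where "T = Sup_fin (t ` I)"
      have TF: "T \<in> F" using ind unfolding indep_def T_def by simp
      have sn: "s l \<notin> F" if lI: "l \<in> I" for l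
      proof
        assume "s l \<in> F"
        obtain u where u: "u \<notin> F" "\<forall>m\<in>I-{l}. t m \<le> u" using indepD[OF ind lI] by blast
        have "s l \<le> u" unfolding s_def using ne[OF lI] fI u(2) by (intro Sup_fin.boundedI) auto
        from upset_mono[OF uF \<open>s l \<in> F\<close> this] u(1) show False by simp
      qed
      have szF: "sup z (s l) \<in> F" if "l \<in> I" for l
      proof -
        have a: "Sup_fin (insert z (t ` (I - {l}))) \<in> F" using zP that by blast
        have "t ` (I - {l}) \<noteq> {}" using ne[OF that] by simp
        then have "Sup_fin (insert z (t ` (I - {l}))) = sup z (s l)" unfolding s_def using fI
          by (simp add: Sup_fin.insert)
        then show ?thesis using a by simp
      qed
      have zS: "sup z S \<in> F"
      proof -
        have "sup z S = Inf_fin {sup z a |a. a \<in> s ` I}"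
          unfolding S_def using fI neI by (intro sup_Inf1_distrib) auto
        also have "{sup z a |a. a \<in> s ` I} = (\<lambda>l. sup z (s l)) ` I" by auto
        finally show ?thesis using filter_Inf_fin[OF lf, of "(\<lambda>l. sup z (s l)) ` I"] fI neI szF by auto
      qed
      obtain j where j: "j \<notin> I" using ex_new_if_finite[OF infinite_UNIV_nat fI] by blast
      define t' where "t' = (\<lambda>m. inf z (t m))(j := S)"
      define I' where "I' = insert j I"
      have img: "t' ` I' = insert S ((\<lambda>m. inf z (t m)) ` I)"
      proof -
        have "t' ` I = (\<lambda>m. inf z (t m)) ` I" unfolding t'_def
          by (rule image_cong) (use j in auto)
        moreover have "t' ` I' = insert (t' j) (t' ` I)" unfolding I'_def by simp
        moreover have "t' j = S" unfolding t'_def by simp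
        ultimately show ?thesis by simp
      qed
      have sd: "Sup_fin ((\<lambda>m. inf z (t m)) ` I) = inf z T"
      proof -
        have "inf z T = Sup_fin {inf z a |a. a \<in> t ` I}"
          unfolding T_def using fI neI by (intro inf_Sup1_distrib) auto
        also have "{inf z a |a. a \<in> t ` I} = (\<lambda>m. inf z (t m)) ` I" by auto
        finally show ?thesis by simp
      qed
      have join: "Sup_fin (t' ` I') \<in> F"
      proof -
        have e: "Sup_fin (t' ` I') = sup S (inf z T)"
          using img sd fI neI by (simp add: Sup_fin.insert)
        have d: "sup S (inf z T) = inf (sup z S) (sup S T)"
          by (simp add: sup_inf_distrib1 sup.commute)
        have le: "inf (sup z S) T \<le> sup S (inf z T)"
          unfolding d by (rule inf_mono[OF order_refl sup.cobounded2])
        have "inf (sup z S) T \<in> F" using zS TF lf unfolding lfilter_def by simp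
        from upset_mono[OF uF this le] show ?thesis using e by simp
      qed
      have rem: "\<exists>u. u \<notin> F \<and> (\<forall>l\<in>I'-{m}. t' l \<le> u)" if m: "m \<in> I'" for m
      proof (cases "m = j")
        case True
        have "t' l \<le> z" if "l \<in> I' - {m}" for l
          using that True unfolding I'_def t'_def by auto
        then show ?thesis using zn by blast
      next
        case False
        then have mI: "m \<in> I" using m unfolding I'_def by simp
        have "t' l \<le> s m" if lI: "l \<in> I' - {m}" for l
        proof (cases "l = j")
          case True
          have "S \<le> s m" unfolding S_def using fI mI by (intro Inf_fin.coboundedI) auto
          then show ?thesis using True unfolding t'_def by simp
        next
          case False
          then have "l \<in> I - {m}" using lI unfolding I'_def by simp
          then have "t l \<le> s m" unfolding s_def using fI by (intro Sup_fin.coboundedI) auto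
          then show ?thesis using False unfolding t'_def by (simp add: le_infI2)
        qed
        then show ?thesis using sn[OF mI] by blast
      qed
      have "indep F I' t'" unfolding indep_def using join rem fI unfolding I'_def by auto
      moreover have "card I' = Suc (card I)" unfolding I'_def using fI j by simp
      ultimately show False using maxk by blast
    qed
  qed
qed

lemma i_to_iii:
  fixes F :: "'a::distrib_lattice set"
  assumes n1: "n \<ge> 1" and np: "n_prime_filter n F"
  shows "\<exists>G. finite G \<and> card G \<le> n \<and> (\<forall>P\<in>G. prime_filter P) \<and> F = \<Inter>G"
proof -
  have lf: "lfilter F" using np unfolding n_prime_filter_def by simp
  consider "F = UNIV" | "F = {}" | "F \<noteq> UNIV" "F \<noteq> {}" by blast
  then show ?thesis
  proof cases
    case 1 then show ?thesis by (intro exI[of _ "{}"]) auto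
  next
    case 2
    have "prime_filter ({}::'a set)" unfolding prime_filter_def lfilter_def prime_upset_def upset_def by simp
    then show ?thesis using 2 n1 by (intro exI[of _ "{{}}"]) auto
  next
    case 3
    then obtain a b where a: "a \<in> F" and b: "b \<notin> F" by blast
    define M where "M = {m. \<exists>I t. indep F I t \<and> card I = m \<and> m \<le> Suc n}"
    have "indep F {0} (\<lambda>_. a)" unfolding indep_def using a b by auto
    then have "1 \<in> M" unfolding M_def by force
    have fM: "finite M" unfolding M_def by (rule finite_subset[of _ "{..Suc n}"]) auto
    define k where "k = Max M"
    have "k \<in> M" unfolding k_def using fM \<open>1 \<in> M\<close> by (intro Max_in) auto
    then obtain I t where ind: "indep F I t" and cI: "card I = k" and kle: "k \<le> Suc n"
      unfolding M_def by blast
    have "k \<noteq> Suc n" using indep_bound[OF n1 np ind] cI by blast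
    then have kn: "k \<le> n" using kle by simp
    have maxk: "\<forall>I' t'. indep F I' t' \<longrightarrow> card I' \<noteq> Suc (card I)"
    proof (intro allI impI notI)
      fix I' t' assume "indep F I' t'" "card I' = Suc (card I)"
      then have "Suc k \<in> M" unfolding M_def using cI kn by auto
      then have "Suc k \<le> k" unfolding k_def using fM by simp
      then show False by simp
    qed
    have fI: "finite I" using ind unfolding indep_def by simp
    define P where "P i = {y. Sup_fin (insert y (t ` (I - {i}))) \<in> F}" for i
    have pf: "prime_filter (P i)" if "i \<in> I" for i
      unfolding prime_filter_def P_def using P_filter[OF lf] P_prime[OF lf ind maxk that] fI by simp
    have "F = \<Inter>(P ` I)"
    proof
      show "F \<subseteq> \<Inter>(P ` I)"
      proof
        fix y assume yF: "y \<in> F"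
        have "y \<in> P i" for i
        proof -
          have "finite (t ` (I - {i}))" using fI by simp
          then show ?thesis using P_contains[OF lf, of "t ` (I - {i})"] yF unfolding P_def by blast
        qed
        then show "y \<in> \<Inter>(P ` I)" by blast
      qed
    next
      show "\<Inter>(P ` I) \<subseteq> F"
      proof
        fix z assume "z \<in> \<Inter>(P ` I)"
        then have "\<forall>i\<in>I. Sup_fin (insert z (t ` (I - {i}))) \<in> F" unfolding P_def by simp
        then show "z \<in> F" using P_inter[OF lf ind maxk] by blast
      qed
    qed
    moreover have "card (P ` I) \<le> n" using card_image_le[OF fI, of P] cI kn by simp
    moreover have "\<forall>Q\<in>P ` I. prime_filter Q" using pf by blast
    moreover have "finite (P ` I)" using fI by simp
    ultimately show ?thesis by (intro exI[of _ "P ` I"] conjI) assumption+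
  qed
qed



theorem mainTheorem7:
  fixes F :: "'a::distrib_lattice set" and n :: nat
  assumes "n \<ge> 1" and "upset F"
  shows "(n_prime_filter n F
          \<longleftrightarrow> (lfilter F \<and> (\<exists>G. finite G \<and> card G \<le> n \<and> (\<forall>P\<in>G. prime_upset P) \<and> F = \<Inter>G)))
       \<and> (n_prime_filter n F
          \<longleftrightarrow> (\<exists>G. finite G \<and> card G \<le> n \<and> (\<forall>P\<in>G. prime_filter P) \<and> F = \<Inter>G))
       \<and> (n_prime_filter n F
          \<longleftrightarrow> (\<exists>h. hom_to_2n n h \<and> F = {x. h x = {..<n}}))"
proof -
  have i3: "\<exists>G. finite G \<and> card G \<le> n \<and> (\<forall>P\<in>G. prime_filter P) \<and> F = \<Inter>G"
    if "n_prime_filter n F" using i_to_iii[OF assms(1) that] .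
  have h3i: "n_prime_filter n F"
    if "\<exists>G. finite G \<and> card G \<le> n \<and> (\<forall>P\<in>G. prime_filter P) \<and> F = \<Inter>G"
  proof -
    from that obtain G where G: "finite G" "card G \<le> n" "\<forall>P\<in>G. prime_filter P" "F = \<Inter>G" by blast
    from iii_to_ii[OF G(1) G(3) G(4)] have l: "lfilter F" and p: "\<forall>P\<in>G. prime_upset P" by auto
    show ?thesis by (rule ii_to_i[OF assms(1) l G(1) G(2) p G(4)])
  qed
  have h2i: "n_prime_filter n F"
    if "lfilter F \<and> (\<exists>G. finite G \<and> card G \<le> n \<and> (\<forall>P\<in>G. prime_upset P) \<and> F = \<Inter>G)"
  proof -
    from that have l: "lfilter F" by simp
    from that obtain G where G: "finite G" "card G \<le> n" "\<forall>P\<in>G. prime_upset P" "F = \<Inter>G" by blast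
    show ?thesis by (rule ii_to_i[OF assms(1) l G])
  qed
  have i2: "lfilter F \<and> (\<exists>G. finite G \<and> card G \<le> n \<and> (\<forall>P\<in>G. prime_upset P) \<and> F = \<Inter>G)"
    if "n_prime_filter n F"
  proof -
    from i3[OF that] obtain G where G: "finite G" "card G \<le> n" "\<forall>P\<in>G. prime_filter P" "F = \<Inter>G" by blast
    from iii_to_ii[OF G(1) G(3) G(4)] have l: "lfilter F" and p: "\<forall>P\<in>G. prime_upset P" by auto
    show ?thesis using l G(1) G(2) p G(4) by (intro conjI exI[of _ G]) simp_all
  qed
  have i4: "\<exists>h. hom_to_2n n h \<and> F = {x. h x = {..<n}}" if "n_prime_filter n F"
  proof -
    from i3[OF that] obtain G where G: "finite G" "card G \<le> n" "\<forall>P\<in>G. prime_filter P" "F = \<Inter>G" by blast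
    show ?thesis using iii_to_iv[OF G] .
  qed
  have h4i: "n_prime_filter n F" if "\<exists>h. hom_to_2n n h \<and> F = {x. h x = {..<n}}"
  proof -
    from that obtain h where "hom_to_2n n h" "F = {x. h x = {..<n}}" by blast
    from iv_to_iii[OF this] show ?thesis by (rule h3i)
  qed
  show ?thesis
    apply (rule conjI, rule iffI, erule i2, erule h2i)
    apply (rule conjI, rule iffI, erule i3, erule h3i)
    apply (rule iffI, erule i4, erule h4i)
    done
qed


end
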